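(* For integers $I\ge 0$ and $S\ge 1$ let $P(I,S)$ be the probability, in the Bluetooth pairing process described in the context, that a fixed clean device $w_t$ ends up paired with an infected device. Then $P(0,S)=0$ and $P(1,S)=\frac{1}{S}$ for every $S\ge 1$, and for all integers $I\ge 2$, $S\ge 1$, $$P(I,S)=\frac{1}{I+S-1}+\frac{S-1}{I+S-1}\,P(I-1,S-1)+\frac{I-1}{I+S-1}\,P(I-2,S),$$ with the convention $P(I',0)=0$ for every $I'\ge 0$ (the term $P(I-1,S-1)$ appears only with coefficient $0$ when $S=1$).
   Context: Pairing process: let $I,S\ge 0$ be integers. There are $I$ infected devices $b_1,\dots,b_I$ and $S$ clean devices $w_1,\dots,w_S$. For $t=1,2,\dots,I$ in this order: if $b_t$ is not yet paired and at least one device other than $b_t$ (infected or clean) is not yet paired, then $b_t$ chooses one of the currently unpaired devices other than itself uniformly at random, independently of all previous choices, and becomes paired with it; otherwise $b_t$ does nothing. Each device belongs to at most one pair, and pairs are never broken. A clean device that ends up paired with an infected device becomes infected; clean devices never initiate pairings. The probability $P(I,S)$ does not depend on which clean device $w_t$ is fixed. *)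

theory Defs
  imports "HOL-Probability.Probability"
begin

text \<open>Devices: infected b_{t+1} is Inl t (t < I), clean w_{j+1} is Inr j (j < S).
  A state records the set of unpaired devices and the set of pairs formed so far,
  each pair stored as (initiating infected device, chosen partner).\<close>

type_synonym device = "nat + nat"
type_synonym pstate = "device set \<times> (device \<times> device) set"

definition init_state :: "nat \<Rightarrow> nat \<Rightarrow> pstate" where
  "init_state I S = (Inl ` {..<I} \<union> Inr ` {..<S}, {})"

definition pair_step :: "nat \<Rightarrow> pstate \<Rightarrow> pstate pmf" where
  "pair_step t st =
     (let U = fst st; Pr = snd st in
      if Inl t \<in> U \<and> U - {Inl t} \<noteq> {} then
        map_pmf (\<lambda>y. (U - {Inl t, y}, insert (Inl t, y) Pr)) (pmf_of_set (U - {Inl t}))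
      else return_pmf st)"

primrec pair_run :: "nat \<Rightarrow> nat \<Rightarrow> nat \<Rightarrow> pstate pmf" where
  "pair_run I S 0 = return_pmf (init_state I S)"
| "pair_run I S (Suc k) = pair_run I S k \<bind> pair_step k"

definition pair_process :: "nat \<Rightarrow> nat \<Rightarrow> pstate pmf" where
  "pair_process I S = pair_run I S I"

text \<open>P(I,S): probability that the fixed clean device Inr 0 ends up paired with an
  infected device.  For S = 0 there is no device Inr 0, so P(I,0) = 0 (the convention).\<close>
definition P :: "nat \<Rightarrow> nat \<Rightarrow> real" where
  "P I S = measure_pmf.prob (pair_process I S) {st. \<exists>i. (Inl i, Inr 0) \<in> snd st}"

end

theory Submission imports Defs begin
lemma prob_bind_pmf_of_set:
  assumes "finite A" "A \<noteq> {}"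
  shows "measure_pmf.prob (bind_pmf (pmf_of_set A) f) X = (\<Sum>y\<in>A. measure_pmf.prob (f y) X) / real (card A)"
proof -
  have "emeasure (measure_pmf (bind_pmf (pmf_of_set A) f)) X = (\<Sum>y\<in>A. emeasure (measure_pmf (f y)) X) / card A"
    using assms by (simp add: nn_integral_pmf_of_set)
  also have "\<dots> = ennreal (\<Sum>y\<in>A. measure_pmf.prob (f y) X) / of_nat (card A)"
    using assms
    by (simp add: measure_pmf.emeasure_eq_measure sum_ennreal)
  also have "\<dots> = ennreal ((\<Sum>y\<in>A. measure_pmf.prob (f y) X) / real (card A))"
    using assms by (subst ennreal_of_nat_eq_real_of_nat, subst divide_ennreal) (auto simp: sum_nonneg card_gt_0_iff)
  finally show ?thesis
    by (simp add: measure_pmf.emeasure_eq_measure) (subst (asm) ennreal_inj; auto simp: sum_nonneg)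
qed

primrec run :: "pstate \<Rightarrow> nat list \<Rightarrow> pstate pmf" where
  "run st [] = return_pmf st"
| "run st (t # ts) = pair_step t st \<bind> (\<lambda>st'. run st' ts)"

lemma run_snoc: "run st (xs @ [t]) = run st xs \<bind> pair_step t"
  by (induction xs arbitrary: st) (simp_all add: bind_return_pmf' bind_assoc_pmf bind_return_pmf)

lemma pair_run_eq: "pair_run I S k = run (init_state I S) [0..<k]"
  by (induction k) (simp_all add: run_snoc)

definition E :: "pstate set" where "E = {st. \<exists>i. (Inl i, Inr 0) \<in> snd st}"

lemma run_mono: "finite (fst st) \<Longrightarrow> st' \<in> set_pmf (run st ts) \<Longrightarrow> snd st \<subseteq> snd st'"
proof (induction ts arbitrary: st)
  case Nil then show ?case by simp
next
  case (Cons t ts)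
  obtain U Pr where st: "st = (U, Pr)" by force
  from Cons.prems obtain s where s: "s \<in> set_pmf (pair_step t st)" and s': "st' \<in> set_pmf (run s ts)"
    by auto
  show ?case
  proof (cases "Inl t \<in> U \<and> U - {Inl t} \<noteq> {}")
    case True
    with s Cons.prems(1) obtain y where "s = (U - {Inl t, y}, insert (Inl t, y) Pr)"
      by (auto simp: pair_step_def st Let_def)
    moreover have "finite (U - {Inl t, y})" using Cons.prems(1) st by auto
    ultimately show ?thesis using Cons.IH[of s] s' st by auto
  next
    case False
    with s have "s = st" by (auto simp: pair_step_def st Let_def)
    then show ?thesis using Cons s' by auto
  qed
qed

lemma run_E: "finite (fst st) \<Longrightarrow> st \<in> E \<Longrightarrow> measure_pmf.prob (run st ts) E = 1"
  by (subst measure_pmf.prob_eq_1) (auto simp: AE_measure_pmf_iff E_def dest!: run_mono)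

fun R :: "nat \<Rightarrow> nat \<Rightarrow> real" where
  "R 0 c = 0"
| "R (Suc a) c = (1 + real c * R a (c - 1) + real a * R (a - 1) c) / real (Suc a + c)"

definition act :: "device set \<Rightarrow> nat list \<Rightarrow> nat" where
  "act U ts = card {t \<in> set ts. Inl t \<in> U}"

lemma act_le: assumes "finite U" "Inr 0 \<in> U" shows "act U ts + 1 \<le> card U"
proof -
  have "card ((Inl :: nat \<Rightarrow> device) ` {t \<in> set ts. Inl t \<in> U}) \<le> card (U - {Inr 0})"
    by (rule Finite_Set.card_mono) (use assms in auto)
  moreover have "card ((Inl :: nat \<Rightarrow> device) ` {t \<in> set ts. Inl t \<in> U}) = act U ts"
    unfolding act_def by (rule card_image) auto
  moreover have "card U > 0" using assms card_gt_0_iff by blast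
  ultimately show ?thesis using assms by simp
qed

lemma main_gen:
  "finite U \<Longrightarrow> distinct ts \<Longrightarrow> Inr 0 \<in> U \<Longrightarrow> (U,Pr) \<notin> E \<Longrightarrow>
   measure_pmf.prob (run (U,Pr) ts) E = R (act U ts) (card U - 1 - act U ts)"
proof (induction ts arbitrary: U Pr)
  case Nil
  then show ?case by (simp add: act_def)
next
  case (Cons t ts)
  show ?case
  proof (cases "Inl t \<in> U")
    case False
    have st: "pair_step t (U,Pr) = return_pmf (U,Pr)" using False by (simp add: pair_step_def)
    have "{x \<in> set (t#ts). Inl x \<in> U} = {x \<in> set ts. Inl x \<in> U}" using False by auto
    hence "act U (t#ts) = act U ts" by (simp only: act_def)
    then show ?thesis using Cons by (simp add: st bind_return_pmf)
  next
    case True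
    define A where "A = U - {Inl t}"
    define a where "a = act U ts"
    define n where "n = card U"
    define c where "c = n - 2 - a"
    define X where "X = {s \<in> set ts. Inl s \<in> U}"
    have tX: "t \<notin> set ts" using Cons.prems by simp
    have finX: "finite X" by (simp add: X_def)
    have aX: "card X = a" by (simp add: a_def act_def X_def)
    have "{x \<in> set (t#ts). Inl x \<in> U} = insert t X" using True by (auto simp: X_def)
    hence actC: "act U (t#ts) = Suc a"
      using tX finX aX by (simp add: act_def X_def)
    have le: "act U (t#ts) + 1 \<le> n" using act_le Cons.prems n_def by blast
    have finA: "finite A" "Inr 0 \<in> A" using Cons.prems by (auto simp: A_def)
    have cardA: "card A = n - 1" using True Cons.prems by (simp add: A_def n_def)
    have step: "run (U,Pr) (t#ts) = pmf_of_set A \<bind> (\<lambda>y. run (U - {Inl t, y}, insert (Inl t, y) Pr) ts)"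
      using True finA by (auto simp: pair_step_def A_def Let_def bind_map_pmf)
    define h :: "device \<Rightarrow> real" where "h y = (if y = Inr 0 then 1 else if y \<in> Inl ` X then R (a-1) c else R a (c-1))" for y
    have eq: "measure_pmf.prob (run (U - {Inl t, y}, insert (Inl t, y) Pr) ts) E = h y" if y: "y \<in> A" for y
    proof (cases "y = Inr 0")
      case True
      then show ?thesis using Cons.prems by (simp add: h_def) (rule run_E, auto simp: E_def)
    next
      case ne: False
      have fin': "finite (U - {Inl t, y})" "Inr 0 \<in> U - {Inl t, y}" "(U - {Inl t, y}, insert (Inl t,y) Pr) \<notin> E"
        using Cons.prems ne y True by (auto simp: E_def A_def)
      have IH: "measure_pmf.prob (run (U - {Inl t, y}, insert (Inl t,y) Pr) ts) E
           = R (act (U - {Inl t, y}) ts) (card (U - {Inl t,y}) - 1 - act (U - {Inl t,y}) ts)"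
        using Cons.IH[OF fin'(1) _ fin'(2) fin'(3)] Cons.prems by simp
      have "U - {Inl t, y} = A - {y}" by (auto simp: A_def)
      hence cU: "card (U - {Inl t, y}) = n - 2" using y cardA finA by simp
      show ?thesis
      proof (cases "y \<in> Inl ` X")
        case True
        then obtain s where s: "y = Inl s" "s \<in> X" by auto
        have "{r \<in> set ts. Inl r \<in> U - {Inl t, y}} = X - {s}" using tX s by (auto simp: X_def)
        hence "act (U - {Inl t, y}) ts = a - 1" using s aX finX by (simp add: act_def)
        moreover have "a \<ge> 1" using s aX finX by (metis card_0_eq empty_iff less_one not_le)
        ultimately show ?thesis using IH cU True ne le actC by (simp add: h_def c_def)
      next
        case False
        have "{r \<in> set ts. Inl r \<in> U - {Inl t, y}} = X" using tX False by (auto simp: X_def)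
        hence "act (U - {Inl t, y}) ts = a" using aX by (simp add: act_def)
        then show ?thesis using IH cU False ne le actC by (simp add: h_def c_def eval_nat_numeral)
      qed
    qed
    define IX :: "device set" where "IX = Inl ` X"
    have sumh: "(\<Sum>y\<in>A. h y) = 1 + real a * R (a-1) c + real c * R a (c-1)"
    proof -
      have sub: "IX \<subseteq> A - {Inr 0}" using tX by (auto simp: X_def A_def IX_def)
      have "(\<Sum>y\<in>A. h y) = h (Inr 0) + (\<Sum>y\<in>A - {Inr 0}. h y)"
        using finA by (simp add: sum.remove)
      also have "(\<Sum>y\<in>A - {Inr 0}. h y) = (\<Sum>y\<in>(A - {Inr 0}) - IX. h y) + (\<Sum>y\<in>IX. h y)"
        using sub finA by (intro sum.subset_diff) auto
      also have "(\<Sum>y\<in>IX. h y) = (\<Sum>y\<in>IX. R (a-1) c)"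
        by (intro sum.cong) (auto simp: h_def IX_def)
      also have "\<dots> = real a * R (a-1) c" using aX by (simp add: card_image IX_def)
      also have "(\<Sum>y\<in>(A - {Inr 0}) - IX. h y) = (\<Sum>y\<in>(A - {Inr 0}) - IX. R a (c-1))"
        by (intro sum.cong) (auto simp: h_def IX_def)
      also have "card ((A - {Inr 0}) - IX) = c"
      proof -
        have "card ((A - {Inr 0}) - IX) = card (A - {Inr 0}) - card (IX)"
          using sub finA by (intro card_Diff_subset) (auto intro: finite_subset)
        also have "\<dots> = n - 2 - a" using finA cardA aX by (simp add: card_image IX_def)
        finally show ?thesis by (simp add: c_def)
      qed
      hence "(\<Sum>y\<in>(A - {Inr 0}) - IX. R a (c-1)) = real c * R a (c - 1)" by simp
      finally show ?thesis by (simp add: h_def)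
    qed
    have "measure_pmf.prob (run (U,Pr) (t#ts)) E = (\<Sum>y\<in>A. h y) / real (n - 1)"
      unfolding step using finA cardA eq by (subst prob_bind_pmf_of_set) auto
    also have "\<dots> = R (Suc a) (n - 1 - Suc a)"
      using le actC by (simp add: sumh c_def)
    finally show ?thesis using actC n_def by simp
  qed
qed

declare R.simps[simp del]

lemma P_R: assumes "S \<ge> 1" shows "P I S = R I (S - 1)"
proof -
  define U :: "device set" where "U = Inl ` {..<I} \<union> Inr ` {..<S}"
  have "P I S = measure_pmf.prob (run (U, {}) [0..<I]) E"
    by (simp add: P_def pair_process_def pair_run_eq init_state_def U_def E_def)
  also have "\<dots> = R (act U [0..<I]) (card U - 1 - act U [0..<I])"
    using assms by (intro main_gen) (auto simp: U_def E_def)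
  also have "act U [0..<I] = I"
  proof -
    have "{t \<in> set [0..<I]. Inl t \<in> U} = {..<I}" by (auto simp: U_def)
    thus ?thesis by (simp add: act_def)
  qed
  also have "card U = I + S"
    unfolding U_def by (subst card_Un_disjoint) (auto simp: card_image)
  finally show ?thesis by simp
qed

theorem mainTheorem1:
  shows "(\<forall>S::nat. S \<ge> 1 \<longrightarrow> P 0 S = 0)
       \<and> (\<forall>S::nat. S \<ge> 1 \<longrightarrow> P 1 S = 1 / real S)
       \<and> (\<forall>I S::nat. I \<ge> 2 \<longrightarrow> S \<ge> 1 \<longrightarrow>
            P I S = 1 / real (I + S - 1)
                    + real (S - 1) / real (I + S - 1) * P (I - 1) (S - 1)
                    + real (I - 1) / real (I + S - 1) * P (I - 2) S)"
proof (intro conjI allI impI)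
  fix S :: nat assume "S \<ge> 1"
  thus "P 0 S = 0" by (simp add: P_R R.simps)
next
  fix S :: nat assume S: "S \<ge> 1"
  thus "P 1 S = 1 / real S" by (simp add: P_R R.simps)
next
  fix I S :: nat assume I: "I \<ge> 2" and S: "S \<ge> 1"
  then obtain k where k: "I = Suc (Suc k)" by (metis add_2_eq_Suc le_Suc_ex)
  have e1: "P I S = (1 + real (S - 1) * R (Suc k) (S - 2) + real (Suc k) * R k (S - 1)) / real (I + S - 1)"
  proof -
    have a1: "S - 1 - 1 = S - 2" "Suc k - 1 = k" "Suc (Suc k) + (S - 1) = I + S - 1" using S k by auto
    have "P I S = R (Suc (Suc k)) (S - 1)" using S k P_R by simp
    also have "\<dots> = (1 + real (S - 1) * R (Suc k) (S - 1 - 1) + real (Suc k) * R (Suc k - 1) (S - 1)) / real (Suc (Suc k) + (S - 1))"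
      by (rule R.simps(2))
    finally show ?thesis by (simp only: a1)
  qed
  have e2: "real (S - 1) * P (I - 1) (S - 1) = real (S - 1) * R (Suc k) (S - 2)"
  proof (cases "S = 1")
    case False
    hence "P (I - 1) (S - 1) = R (Suc k) (S - 1 - 1)" using S k P_R by simp
    moreover have "S - 1 - 1 = S - 2" by simp
    ultimately show ?thesis by simp
  qed simp
  have e3: "P (I - 2) S = R k (S - 1)" using S k P_R by simp
  show "P I S = 1 / real (I + S - 1)
                    + real (S - 1) / real (I + S - 1) * P (I - 1) (S - 1)
                    + real (I - 1) / real (I + S - 1) * P (I - 2) S"
  proof -
    have f2: "real (S - 1) / real (I + S - 1) * P (I - 1) (S - 1) = real (S - 1) * R (Suc k) (S - 2) / real (I + S - 1)"
      using e2 by (metis times_divide_eq_left mult.commute)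
    have f3: "real (I - 1) / real (I + S - 1) * P (I - 2) S = real (Suc k) * R k (S - 1) / real (I + S - 1)"
      using e3 k by simp
    show ?thesis unfolding f2 f3 e1 by (simp only: add_divide_distrib)
  qed
qed

end
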